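(* Let $X$ be a nonempty CFG-space over a Boolean ring $B$ and $f:X\to B$ a contractive map, where $B$ carries the metric $d(a,b)=a+b$. Then there exists $u\in X$ such that $f(x)\le f(u)$ for all $x\in X$.
   Context: $B$ is a Boolean ring ($a\vee b=a+b+ab$, $a\le b\iff ab=a$; $a_1\oplus\cdots\oplus a_n$ denotes a sum of pairwise disjoint elements). A Boolean metric space over $B$: set $X$ with $d:X\times X\to B$, $d(x,y)=0\iff x=y$, symmetric, $d(x,z)\le d(x,y)\vee d(y,z)$. For $x_1,\dots,x_n\in X$, $a_i\in B$ with $a_1\oplus\cdots\oplus a_n=1$, $x$ is a convex combination of the $x_i$ with coefficients $a_i$ if $a_id(x,x_i)=0$ for all $i$. A CFG-space is a space in which all such combinations exist and every element is a convex combination of elements of some fixed finite subset. A map $f$ is contractive if $d(f(x),f(y))\le d(x,y)$. *)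

theory Defs
  imports Main
begin

text \<open>We model B as a type of class comm_ring_1 with the idempotency law as hypothesis
  (commutativity follows from idempotency anyway).\<close>

definition boolean_ring :: "'b::comm_ring_1 itself \<Rightarrow> bool" where
  "boolean_ring _ \<longleftrightarrow> (\<forall>a::'b. a * a = a)"

definition bjoin :: "'b::comm_ring_1 \<Rightarrow> 'b \<Rightarrow> 'b" where
  "bjoin a b = a + b + a * b"

definition ble :: "'b::comm_ring_1 \<Rightarrow> 'b \<Rightarrow> bool" where
  "ble a b \<longleftrightarrow> a * b = a"

definition boolean_metric :: "'a set \<Rightarrow> ('a \<Rightarrow> 'a \<Rightarrow> 'b::comm_ring_1) \<Rightarrow> bool" where
  "boolean_metric X d \<longleftrightarrow>
     (\<forall>x\<in>X. \<forall>y\<in>X. d x y = 0 \<longleftrightarrow> x = y) \<and>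
     (\<forall>x\<in>X. \<forall>y\<in>X. d x y = d y x) \<and>
     (\<forall>x\<in>X. \<forall>y\<in>X. \<forall>z\<in>X. ble (d x z) (bjoin (d x y) (d y z)))"

definition partition_of_unity :: "nat \<Rightarrow> (nat \<Rightarrow> 'b::comm_ring_1) \<Rightarrow> bool" where
  "partition_of_unity n a \<longleftrightarrow>
     (\<forall>i<n. \<forall>j<n. i \<noteq> j \<longrightarrow> a i * a j = 0) \<and> (\<Sum>i<n. a i) = 1"

definition convex_comb ::
  "('a \<Rightarrow> 'a \<Rightarrow> 'b::comm_ring_1) \<Rightarrow> 'a \<Rightarrow> nat \<Rightarrow> (nat \<Rightarrow> 'a) \<Rightarrow> (nat \<Rightarrow> 'b) \<Rightarrow> bool" where
  "convex_comb d x n xs a \<longleftrightarrow> (\<forall>i<n. a i * d x (xs i) = 0)"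

definition CFG_space :: "'a set \<Rightarrow> ('a \<Rightarrow> 'a \<Rightarrow> 'b::comm_ring_1) \<Rightarrow> bool" where
  "CFG_space X d \<longleftrightarrow> boolean_metric X d \<and>
     (\<forall>n xs a. (\<forall>i<n. xs i \<in> X) \<and> partition_of_unity n a \<longrightarrow>
        (\<exists>x\<in>X. convex_comb d x n xs a)) \<and>
     (\<exists>S. finite S \<and> S \<subseteq> X \<and>
        (\<forall>x\<in>X. \<exists>n xs a. (\<forall>i<n. xs i \<in> S) \<and> partition_of_unity n a \<and> convex_comb d x n xs a))"

definition contractive_to_B :: "'a set \<Rightarrow> ('a \<Rightarrow> 'a \<Rightarrow> 'b::comm_ring_1) \<Rightarrow> ('a \<Rightarrow> 'b) \<Rightarrow> bool" where
  "contractive_to_B X d f \<longleftrightarrow> (\<forall>x\<in>X. \<forall>y\<in>X. ble (f x + f y) (d x y))"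

end

theory Submission
  imports Defs
begin

lemma char2:
  fixes a :: "'b::comm_ring_1"
  assumes idem: "\<forall>a::'b. a*a = a"
  shows "a + a = 0"
proof -
  have "(a+a)*(a+a) = a+a" using idem by blast
  moreover have "(a+a)*(a+a) = (a*a+a*a)+(a*a+a*a)" by (simp add: algebra_simps)
  ultimately have "(a+a)+(a+a) = a+a" using idem by simp
  thus ?thesis by simp
qed

lemma coef_eq:
  fixes a fx fs dd :: "'b::comm_ring_1"
  assumes idem: "\<forall>a::'b. a*a = a"
    and "ble (fx + fs) dd" and "a * dd = 0"
  shows "a * fx = a * fs"
proof -
  have "(fx+fs)*dd = fx+fs" using assms(2) by (simp add: ble_def)
  hence "a*(fx+fs) = (fx+fs)*(a*dd)" by (metis mult.commute mult.left_commute)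
  hence "a*fx + a*fs = 0" using assms(3) by (simp add: algebra_simps)
  moreover have "a*fs + a*fs = 0" using char2[OF idem] by blast
  ultimately show ?thesis by (metis add_right_cancel)
qed

lemma join_exists:
  fixes X :: "'a set" and d :: "'a \<Rightarrow> 'a \<Rightarrow> 'b::comm_ring_1" and f :: "'a \<Rightarrow> 'b"
  assumes idem: "\<forall>a::'b. a*a = a"
    and cfg: "CFG_space X d" and con: "contractive_to_B X d f"
    and u: "u \<in> X" and v: "v \<in> X"
  shows "\<exists>w\<in>X. ble (f u) (f w) \<and> ble (f v) (f w)"
proof -
  define c where "c = f v * (1 - f u)"
  define xs where "xs = (\<lambda>i::nat. if i = 0 then u else v)"
  define a where "a = (\<lambda>i::nat. if i = 0 then 1 - c else c)"
  have cc: "c*c = c" using idem by blast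
  have pu: "partition_of_unity 2 a"
    unfolding partition_of_unity_def a_def
  proof (intro conjI allI impI)
    fix i j :: nat assume "i < 2" "j < 2" "i \<noteq> j"
    thus "(if i = 0 then 1 - c else c) * (if j = 0 then 1 - c else c) = 0"
      using cc by (auto simp: algebra_simps)
  next
    show "(\<Sum>i<(2::nat). if i = 0 then 1 - c else c) = 1"
      by (simp add: numeral_2_eq_2)
  qed
  have "\<forall>i<2. xs i \<in> X" using u v by (simp add: xs_def)
  then obtain w where w: "w \<in> X" and cw: "convex_comb d w 2 xs a"
    using cfg pu unfolding CFG_space_def by blast
  have d1: "(1-c) * d w u = 0" using cw unfolding convex_comb_def xs_def a_def by (metis zero_less_numeral)
  have d2: "c * d w v = 0" using cw unfolding convex_comb_def xs_def a_def by (metis one_less_numeral_iff semiring_norm(76) one_neq_zero)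
  have e1: "(1-c) * f w = (1-c) * f u"
    using coef_eq[OF idem _ d1] con w u by (simp add: contractive_to_B_def)
  have e2: "c * f w = c * f v"
    using coef_eq[OF idem _ d2] con w v by (simp add: contractive_to_B_def)
  have fw: "f w = (1-c) * f u + c * f v"
  proof -
    have "f w = (1-c) * f w + c * f w" by (simp add: algebra_simps)
    thus ?thesis using e1 e2 by simp
  qed
  have uu: "f u * f u = f u" and vv: "f v * f v = f v" using idem by blast+
  have cu: "c * f u = 0"
  proof -
    have "c * f u = f v * (f u - f u * f u)" by (simp add: c_def algebra_simps)
    thus ?thesis using uu by simp
  qed
  have "f u * f w = f u"
  proof -
    have "f u * f w = (1-c) * (f u * f u) + (c * f u) * f v" by (simp add: fw algebra_simps)
    also have "\<dots> = f u - c * f u" using uu cu by (simp add: algebra_simps)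
    finally show ?thesis using cu by simp
  qed
  moreover have "f v * f w = f v"
  proof -
    have cv: "c * f v = c"
    proof -
      have "c * f v = (f v * f v) * (1 - f u)" by (simp add: c_def algebra_simps)
      thus ?thesis using vv by (simp add: c_def)
    qed
    have "f v * f w = f u * f v - (c * f u) * f v + c * (f v * f v)" by (simp add: fw algebra_simps)
    also have "\<dots> = f u * f v + c" using cu vv cv by simp
    also have "\<dots> = f v" by (simp add: c_def algebra_simps vv)
    finally show ?thesis .
  qed
  ultimately show ?thesis using w by (auto simp: ble_def)
qed

lemma bound_finite:
  fixes X :: "'a set" and d :: "'a \<Rightarrow> 'a \<Rightarrow> 'b::comm_ring_1" and f :: "'a \<Rightarrow> 'b"
  assumes idem: "\<forall>a::'b. a*a = a"
    and cfg: "CFG_space X d" and con: "contractive_to_B X d f"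
    and x0: "x0 \<in> X"
  shows "finite T \<Longrightarrow> T \<subseteq> X \<Longrightarrow> \<exists>u\<in>X. \<forall>s\<in>T. ble (f s) (f u)"
proof (induction T rule: finite_induct)
  case empty
  then show ?case using x0 by blast
next
  case (insert t T)
  then obtain u where u: "u \<in> X" "\<forall>s\<in>T. ble (f s) (f u)" by blast
  obtain w where w: "w \<in> X" "ble (f u) (f w)" "ble (f t) (f w)"
    using join_exists[OF idem cfg con u(1)] insert.prems by blast
  have "\<forall>s\<in>T. ble (f s) (f w)"
  proof
    fix s assume "s \<in> T"
    hence "f s * f u = f s" using u by (simp add: ble_def)
    moreover have "f u * f w = f u" using w by (simp add: ble_def)
    ultimately have "f s * f w = f s" by (metis mult.assoc)
    thus "ble (f s) (f w)" by (simp add: ble_def)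
  qed
  thus ?case using w by blast
qed

theorem mainTheorem19:
  fixes X :: "'a set" and d :: "'a \<Rightarrow> 'a \<Rightarrow> 'b::comm_ring_1" and f :: "'a \<Rightarrow> 'b"
  assumes "boolean_ring TYPE('b)"
    and "X \<noteq> {}"
    and "CFG_space X d"
    and "contractive_to_B X d f"
  shows "\<exists>u\<in>X. \<forall>x\<in>X. ble (f x) (f u)"
proof -
  have idem: "\<forall>a::'b. a*a = a" using assms(1) by (simp add: boolean_ring_def)
  obtain x0 where x0: "x0 \<in> X" using assms(2) by blast
  obtain S where S: "finite S" "S \<subseteq> X"
    and rep: "\<forall>x\<in>X. \<exists>n xs a. (\<forall>i<n. xs i \<in> S) \<and> partition_of_unity n a \<and> convex_comb d x n xs a"
    using assms(3) unfolding CFG_space_def by blast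
  obtain u where u: "u \<in> X" "\<forall>s\<in>S. ble (f s) (f u)"
    using bound_finite[OF idem assms(3) assms(4) x0 S] by blast
  have "\<forall>x\<in>X. ble (f x) (f u)"
  proof
    fix x assume x: "x \<in> X"
    then obtain n xs a where xs: "\<forall>i<n. xs i \<in> S" and pu: "partition_of_unity n a"
      and cv: "convex_comb d x n xs a" using rep by blast
    have ai: "a i * f x = a i * f (xs i)" if "i < n" for i
    proof -
      have "xs i \<in> X" using xs S that by blast
      hence "ble (f x + f (xs i)) (d x (xs i))" using assms(4) x by (simp add: contractive_to_B_def)
      moreover have "a i * d x (xs i) = 0" using cv that by (simp add: convex_comb_def)
      ultimately show ?thesis using coef_eq[OF idem] by blast
    qed
    have sum1: "(\<Sum>i<n. a i) = 1" using pu by (simp add: partition_of_unity_def)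
    have fx: "f x = (\<Sum>i<n. a i * f (xs i))"
    proof -
      have "f x = (\<Sum>i<n. a i) * f x" using sum1 by simp
      also have "\<dots> = (\<Sum>i<n. a i * f x)" by (simp add: sum_distrib_right)
      also have "\<dots> = (\<Sum>i<n. a i * f (xs i))" using ai by simp
      finally show ?thesis .
    qed
    have "f x * f u = (\<Sum>i<n. a i * (f (xs i) * f u))" by (simp add: fx sum_distrib_right mult.assoc)
    also have "\<dots> = (\<Sum>i<n. a i * f (xs i))"
      using xs u(2) by (intro sum.cong) (auto simp: ble_def)
    finally show "ble (f x) (f u)" using fx by (simp add: ble_def)
  qed
  thus ?thesis using u by blast
qed

end
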